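(* For $\rho \in [-1,1]$ define $C_\rho:[0,1]^2\to[0,1]$ by: if $u \in \{0,1\}$ or $v\in\{0,1\}$, $C_\rho(u,v)=uv$; and for $u,v\in(0,1)$, $$C_\rho(u,v) = \begin{cases} W(u,v) & \text{if } \rho \le \underline{\rho}_{uv},\\ M(u,v) & \text{if } \rho \ge \overline{\rho}_{uv},\\ uv + \rho\sqrt{u(1-u)v(1-v)} & \text{otherwise},\end{cases}$$ where $W(u,v)=\max(u+v-1,0)$, $M(u,v)=\min(u,v)$, $\underline{\rho}_{uv} = \frac{\max(u+v-1,0)-uv}{\sqrt{u(1-u)v(1-v)}}$ and $\overline{\rho}_{uv} = \frac{\min(u,v)-uv}{\sqrt{u(1-u)v(1-v)}}$. Then for every $\rho\in[-1,1]$, $C_\rho$ is a bivariate copula, i.e. (i) $C_\rho(0,v)=C_\rho(u,0)=0$, (ii) $C_\rho(u,1)=u$ and $C_\rho(1,v)=v$, and (iii) $C_\rho(u_2,v_2)-C_\rho(u_2,v_1)-C_\rho(u_1,v_2)+C_\rho(u_1,v_1)\ge 0$ for all $0\le u_1\le u_2\le 1$, $0\le v_1\le v_2\le1$. Moreover $C_{-1}=W$, $C_0(u,v)=uv$ and $C_1=M$ on $[0,1]^2$.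
   Context: $C_\rho$ is called the correlated \emph{and} operator: for events with probabilities $u,v$ and Pearson correlation $\rho$ it gives the probability of their conjunction, clamped to the Fréchet bounds $W$ and $M$. *)

theory Defs
  imports Complex_Main
begin

definition frechetW :: "real \<Rightarrow> real \<Rightarrow> real" where
  "frechetW u v = max (u + v - 1) 0"

definition frechetM :: "real \<Rightarrow> real \<Rightarrow> real" where
  "frechetM u v = min u v"

definition rho_lower :: "real \<Rightarrow> real \<Rightarrow> real" where
  "rho_lower u v = (max (u + v - 1) 0 - u * v) / sqrt (u * (1 - u) * v * (1 - v))"

definition rho_upper :: "real \<Rightarrow> real \<Rightarrow> real" where
  "rho_upper u v = (min u v - u * v) / sqrt (u * (1 - u) * v * (1 - v))"

definition corr_and :: "real \<Rightarrow> real \<Rightarrow> real \<Rightarrow> real" where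
  "corr_and \<rho> u v =
     (if u \<in> {0, 1} \<or> v \<in> {0, 1} then u * v
      else if \<rho> \<le> rho_lower u v then frechetW u v
      else if \<rho> \<ge> rho_upper u v then frechetM u v
      else u * v + \<rho> * sqrt (u * (1 - u) * v * (1 - v)))"

end

theory Submission imports Defs "HOL-Analysis.Analysis" begin

definition gg :: "real \<Rightarrow> real" where "gg x = sqrt (x * (1-x))"
definition dq :: "real \<Rightarrow> real" where "dq x = (1-2 * x)/(2 *  gg x)"
definition PP :: "real \<Rightarrow> real \<Rightarrow> real \<Rightarrow> real" where "PP r u v = u * v + r  *  gg u  *  gg v"
definition KK :: "real \<Rightarrow> real \<Rightarrow> real \<Rightarrow> real" where "KK r u v = min (min u v) (PP r u v)"
definition DD :: "real \<Rightarrow> real \<Rightarrow> real \<Rightarrow> real" where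
 "DD r u v = (if PP r u v < min u v then v + r  *  dq u  *  gg v else if u < v then 1 else 0)"

lemma gg_sq: "0 \<le> x \<Longrightarrow> x \<le> 1 \<Longrightarrow> gg x  *  gg x = x * (1-x)"
  unfolding gg_def by (simp add: mult_nonneg_nonneg)
lemma gg_pos: "0 < x \<Longrightarrow> x < 1 \<Longrightarrow> gg x > 0"
  unfolding gg_def by simp
lemma gg_nonneg: "gg x \<ge> 0 \<or> True" by simp
lemma gg_01[simp]: "gg 0 = 0" "gg 1 = 0" unfolding gg_def by auto
lemma gg_refl: "gg (1-x) = gg x" unfolding gg_def by (simp add: mult.commute)

lemma cont_sq: "continuous_on A gg"
  unfolding gg_def by (intro continuous_intros)

lemma deriv_sq: "0 < x \<Longrightarrow> x < 1 \<Longrightarrow> (gg has_real_derivative dq x) (at x)"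
proof -
  assume a: "0 < x" "x < 1"
  have p: "x * (1-x) > 0" using a by simp
  have "((\<lambda>x. sqrt (x * (1-x))) has_real_derivative inverse (sqrt (x * (1-x))) / 2  *  (1 - 2 * x)) (at x)"
    by (rule DERIV_chain2[where f=sqrt and g="\<lambda>x. x * (1-x)" and x=x, OF DERIV_real_sqrt[OF p]]) (auto intro!: derivative_eq_intros)
  moreover have "inverse (sqrt (x * (1-x))) / 2  *  (1 - 2 * x) = dq x"
    unfolding dq_def gg_def by (simp add: field_simps)
  ultimately show ?thesis unfolding gg_def[abs_def] by simp
qed

lemma sqless: "0 \<le> (a::real) \<Longrightarrow> 0 \<le> b \<Longrightarrow> a < b \<longleftrightarrow> a * a < b * b"
  using mult_strict_mono[of a b a b] mult_mono[of b a b a] by (auto simp: not_less[symmetric])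

lemma lessU: assumes "0<u" "u<1" "0<v" "v<1" "0 \<le> r"
  shows "PP r u v < u \<longleftrightarrow> r^2 * (1-u) * v < u * (1-v)"
proof -
  have "PP r u v < u \<longleftrightarrow> r  *  gg u  *  gg v < u * (1-v)" unfolding PP_def by (auto simp: algebra_simps)
  also have "\<dots> \<longleftrightarrow> (r  *  gg u  *  gg v) * (r  *  gg u  *  gg v) < (u * (1-v)) * (u * (1-v))"
    apply (rule sqless) using assms gg_pos[of u] gg_pos[of v] by auto
  also have "(r  *  gg u  *  gg v) * (r  *  gg u  *  gg v) = r^2  *  (u * (1-u))  *  (v * (1-v))"
  proof -
    have "(r * gg u * gg v) * (r * gg u * gg v) = r^2 * (gg u * gg u) * (gg v * gg v)" by (simp add: power2_eq_square algebra_simps)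
    then show ?thesis using gg_sq[of u] gg_sq[of v] assms by simp
  qed
  also have "r^2  *  (u * (1-u))  *  (v * (1-v)) < (u * (1-v)) * (u * (1-v)) \<longleftrightarrow> (r^2 * (1-u) * v)  *  (u * (1-v)) < (u * (1-v)) * (u * (1-v))"
    by (simp add: algebra_simps)
  also have "\<dots> \<longleftrightarrow> r^2 * (1-u) * v < u * (1-v)"
    using assms by (intro mult_less_cancel_right_pos) auto
  finally show ?thesis .
qed

lemma lessV: assumes "0<u" "u<1" "0<v" "v<1" "0 \<le> r"
  shows "PP r u v < v \<longleftrightarrow> r^2 * u * (1-v) < v * (1-u)"
proof -
  have "PP r u v = PP r v u" unfolding PP_def by (simp add: algebra_simps)
  then show ?thesis using lessU[of v u r] assms by (simp add: algebra_simps)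
qed

lemma eqU: assumes "0<u" "u<1" "0<v" "v<1" "0 \<le> r" "PP r u v = u"
  shows "u = r^2 * v/(r^2 * v+1-v)"
proof -
  have "r  *  gg u  *  gg v = u * (1-v)" using assms(6) unfolding PP_def by (auto simp: algebra_simps)
  then have "(r  *  gg u  *  gg v) * (r  *  gg u  *  gg v) = (u * (1-v)) * (u * (1-v))" by simp
  moreover have "(r  *  gg u  *  gg v) * (r  *  gg u  *  gg v) = r^2  *  (u * (1-u))  *  (v * (1-v))"
  proof -
    have "(r * gg u * gg v) * (r * gg u * gg v) = r^2 * (gg u * gg u) * (gg v * gg v)" by (simp add: power2_eq_square algebra_simps)
    then show ?thesis using gg_sq[of u] gg_sq[of v] assms by simp
  qed
  ultimately have "(r^2 * (1-u) * v)  *  (u * (1-v)) = u * (1-v)  *  (u * (1-v))" by (simp add: algebra_simps)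
  then have "r^2 * (1-u) * v = u * (1-v)" using assms by simp
  moreover have "r^2 * v+1-v > 0" using assms by (smt (verit) zero_le_power2 mult_nonneg_nonneg)
  ultimately show ?thesis by (simp add: field_simps)
qed

lemma eqV: assumes "0<u" "u<1" "0<v" "v<1" "0 \<le> r" "PP r u v = v"
  shows "u = v/(r^2 * (1-v)+v)"
proof -
  have "r  *  gg u  *  gg v = v * (1-u)" using assms(6) unfolding PP_def by (auto simp: algebra_simps)
  then have "(r  *  gg u  *  gg v) * (r  *  gg u  *  gg v) = (v * (1-u)) * (v * (1-u))" by simp
  moreover have "(r  *  gg u  *  gg v) * (r  *  gg u  *  gg v) = r^2  *  (u * (1-u))  *  (v * (1-v))"
  proof -
    have "(r * gg u * gg v) * (r * gg u * gg v) = r^2 * (gg u * gg u) * (gg v * gg v)" by (simp add: power2_eq_square algebra_simps)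
    then show ?thesis using gg_sq[of u] gg_sq[of v] assms by simp
  qed
  ultimately have "(r^2 * u * (1-v))  *  (v * (1-u)) = v * (1-u)  *  (v * (1-u))" by (simp add: algebra_simps)
  then have "r^2 * u * (1-v) = v * (1-u)" using assms by simp
  moreover have "r^2 * (1-v)+v > 0" using assms by (smt (verit) zero_le_power2 mult_nonneg_nonneg)
  ultimately show ?thesis by (simp add: field_simps)
qed

lemma sqless2: "0 \<le> (a::real) \<Longrightarrow> 0 \<le> b \<Longrightarrow> a * a < b * b \<Longrightarrow> a < b"
  using sqless by blast

lemma Qbounds: assumes "0<u" "u<1" "0<v" "v<1" "0 \<le> r"
  and m1: "r^2 * (1-u) * v < u * (1-v)" and m2: "r^2 * u * (1-v) < v * (1-u)"
  shows "0 \<le> v + r * dq u * gg v \<and> v + r * dq u * gg v \<le> 1"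
proof -
  have gu: "gg u > 0" and gv: "gg v > 0" using gg_pos assms by auto
  have gu2: "gg u * gg u = u * (1-u)" and gv2: "gg v * gg v = v * (1-v)" using gg_sq assms by auto
  have e: "r * dq u * gg v = r * (1 - 2 * u) * gg v / (2 * gg u)" unfolding dq_def by simp
  have A: "r * u * gg v < v * gg u"
  proof (rule sqless2)
    show "0 \<le> r * u * gg v" using assms gv by simp
    show "0 \<le> v * gg u" using assms gu by simp
    have "(r * u * gg v) * (r * u * gg v) = r^2 * u * u * (gg v * gg v)"
      by (simp add: power2_eq_square algebra_simps)
    also have "\<dots> = (r^2 * u * (1-v)) * (u * v)"
      unfolding gv2 by (simp add: algebra_simps)
    also have "\<dots> < (v * (1-u)) * (u * v)" using m2 assms by (intro mult_strict_right_mono) auto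
    also have "\<dots> = v * v * (gg u * gg u)" unfolding gu2 by (simp add: algebra_simps)
    also have "\<dots> = (v * gg u) * (v * gg u)" by (simp add: algebra_simps)
    finally show "(r * u * gg v) * (r * u * gg v) < (v * gg u) * (v * gg u)" .
  qed
  have B: "r * (1-u) * gg v < (1-v) * gg u"
  proof (rule sqless2)
    show "0 \<le> r * (1-u) * gg v" using assms gv by simp
    show "0 \<le> (1-v) * gg u" using assms gu by simp
    have "(r * (1-u) * gg v) * (r * (1-u) * gg v) = r^2 * (1-u) * (1-u) * (gg v * gg v)"
      by (simp add: power2_eq_square algebra_simps)
    also have "\<dots> = (r^2 * (1-u) * v) * ((1-u) * (1-v))"
      unfolding gv2 by (simp add: algebra_simps)
    also have "\<dots> < (u * (1-v)) * ((1-u) * (1-v))" using m1 assms by (intro mult_strict_right_mono) auto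
    also have "\<dots> = (1-v) * (1-v) * (gg u * gg u)" unfolding gu2 by (simp add: algebra_simps)
    also have "\<dots> = ((1-v) * gg u) * ((1-v) * gg u)" by (simp add: algebra_simps)
    finally show "(r * (1-u) * gg v) * (r * (1-u) * gg v) < ((1-v) * gg u) * ((1-v) * gg u)" .
  qed
  have gvu: "0 \<le> v * gg u" "0 \<le> (1-v) * gg u" using gu assms by auto
  have "r * (1 - 2 * u) * gg v \<ge> - (2 * v * gg u)"
  proof (cases "u \<le> 1/2")
    case True
    have "0 \<le> r * (1 - 2 * u) * gg v" using True assms gv by (intro mult_nonneg_nonneg) auto
    then show ?thesis using gvu by linarith
  next
    case False
    have "(2 * u - 1) * gg v \<le> u * gg v" using gv False assms by (intro mult_right_mono) auto
    then have "r * ((2 * u - 1) * gg v) \<le> r * (u * gg v)" using assms by (intro mult_left_mono) auto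
    moreover have "r * (1 - 2 * u) * gg v = - (r * ((2 * u - 1) * gg v))" by (simp add: algebra_simps)
    moreover have "r * (u * gg v) = r * u * gg v" by simp
    ultimately show ?thesis using A gvu by linarith
  qed
  then have Q1: "r * dq u * gg v \<ge> - v" unfolding e using gu by (simp add: field_simps)
  have "r * (1 - 2 * u) * gg v \<le> 2 * (1 - v) * gg u"
  proof (cases "u \<ge> 1/2")
    case True
    have "0 \<le> r * (2 * u - 1) * gg v" using True assms gv by (intro mult_nonneg_nonneg) auto
    moreover have "r * (1 - 2 * u) * gg v = - (r * (2 * u - 1) * gg v)" by (simp add: algebra_simps)
    ultimately show ?thesis using gvu by linarith
  next
    case False
    have "(1 - 2 * u) * gg v \<le> (1-u) * gg v" using gv assms by (intro mult_right_mono) auto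
    then have "r * ((1 - 2 * u) * gg v) \<le> r * ((1-u) * gg v)" using assms by (intro mult_left_mono) auto
    then show ?thesis using B gvu by (simp add: mult.assoc algebra_simps)
  qed
  then have Q2: "r * dq u * gg v \<le> 1 - v" unfolding e using gu by (simp add: field_simps)
  show ?thesis using Q1 Q2 by simp
qed

lemma dQnonneg: assumes "0<u" "u<1" "0<v" "v<1" "0 \<le> r"
  and m1: "r^2 * (1-u) * v < u * (1-v)" and m2: "r^2 * u * (1-v) < v * (1-u)"
  shows "0 \<le> 1 + r * dq u * dq v"
proof -
  have gu: "gg u > 0" and gv: "gg v > 0" using gg_pos assms by auto
  have gu2: "gg u * gg u = u * (1-u)" and gv2: "gg v * gg v = v * (1-v)" using gg_sq assms by auto
  have e: "r * dq u * dq v = r * (1 - 2 * u) * (1 - 2 * v) / (4 * (gg u * gg v))" unfolding dq_def by simp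
  have A: "r * (1-u) * v < gg u * gg v"
  proof (rule sqless2)
    show "0 \<le> r * (1-u) * v" using assms by simp
    show "0 \<le> gg u * gg v" using gu gv by simp
    have "(r * (1-u) * v) * (r * (1-u) * v) = (r^2 * (1-u) * v) * ((1-u) * v)"
      by (simp add: power2_eq_square algebra_simps)
    also have "\<dots> < (u * (1-v)) * ((1-u) * v)" using m1 assms by (intro mult_strict_right_mono) auto
    also have "\<dots> = (gg u * gg u) * (gg v * gg v)" unfolding gu2 gv2 by (simp add: algebra_simps)
    also have "\<dots> = (gg u * gg v) * (gg u * gg v)" by (simp add: algebra_simps)
    finally show "(r * (1-u) * v) * (r * (1-u) * v) < (gg u * gg v) * (gg u * gg v)" .
  qed
  have B: "r * u * (1-v) < gg u * gg v"
  proof (rule sqless2)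
    show "0 \<le> r * u * (1-v)" using assms by simp
    show "0 \<le> gg u * gg v" using gu gv by simp
    have "(r * u * (1-v)) * (r * u * (1-v)) = (r^2 * u * (1-v)) * (u * (1-v))"
      by (simp add: power2_eq_square algebra_simps)
    also have "\<dots> < (v * (1-u)) * (u * (1-v))" using m2 assms by (intro mult_strict_right_mono) auto
    also have "\<dots> = (gg u * gg u) * (gg v * gg v)" unfolding gu2 gv2 by (simp add: algebra_simps)
    also have "\<dots> = (gg u * gg v) * (gg u * gg v)" by (simp add: algebra_simps)
    finally show "(r * u * (1-v)) * (r * u * (1-v)) < (gg u * gg v) * (gg u * gg v)" .
  qed
  have gp: "0 \<le> gg u * gg v" using gu gv by simp
  have "r * (1 - 2 * u) * (1 - 2 * v) \<ge> - (4 * (gg u * gg v))"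
  proof (cases "u \<le> 1/2")
    case True
    show ?thesis
    proof (cases "v \<le> 1/2")
      case True
      have "0 \<le> r * (1 - 2 * u) * (1 - 2 * v)" using True \<open>u \<le> 1/2\<close> assms by (intro mult_nonneg_nonneg) auto
      then show ?thesis using gp by linarith
    next
      case False
      have "(1 - 2 * u) * (2 * v - 1) \<le> (1-u) * v" using False True assms by (intro mult_mono) auto
      then have "r * ((1 - 2 * u) * (2 * v - 1)) \<le> r * ((1-u) * v)" using assms by (intro mult_left_mono) auto
      moreover have "r * (1 - 2 * u) * (1 - 2 * v) = - (r * ((1 - 2 * u) * (2 * v - 1)))" by (simp add: algebra_simps)
      moreover have "r * ((1-u) * v) = r * (1-u) * v" by simp
      ultimately show ?thesis using A gp by linarith
    qed
  next
    case False
    show ?thesis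
    proof (cases "v \<le> 1/2")
      case True
      have "(2 * u - 1) * (1 - 2 * v) \<le> u * (1-v)" using False True assms by (intro mult_mono) auto
      then have "r * ((2 * u - 1) * (1 - 2 * v)) \<le> r * (u * (1-v))" using assms by (intro mult_left_mono) auto
      moreover have "r * (1 - 2 * u) * (1 - 2 * v) = - (r * ((2 * u - 1) * (1 - 2 * v)))" by (simp add: algebra_simps)
      moreover have "r * (u * (1-v)) = r * u * (1-v)" by simp
      ultimately show ?thesis using B gp by linarith
    next
      case True2: False
      have "0 \<le> r * (2 * u - 1) * (2 * v - 1)" using True2 False assms by (intro mult_nonneg_nonneg) auto
      moreover have "r * (1 - 2 * u) * (1 - 2 * v) = r * (2 * u - 1) * (2 * v - 1)" by (simp add: algebra_simps)
      ultimately show ?thesis using gp by linarith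
    qed
  qed
  then show ?thesis unfolding e using gu gv by (simp add: field_simps)
qed

lemma cont_gg[continuous_intros]: "continuous_on A f \<Longrightarrow> continuous_on A (\<lambda>x. gg (f x))"
  unfolding gg_def by (intro continuous_intros)
lemma cont_PP: "continuous_on A (\<lambda>x. PP r x v)"
  unfolding PP_def by (intro continuous_intros cont_gg)
lemma cont_PP2: "continuous_on A (\<lambda>x. PP r u x)"
  unfolding PP_def by (intro continuous_intros cont_gg)
lemma cont_KK: "continuous_on A (\<lambda>x. KK r x v)"
  unfolding KK_def by (intro continuous_intros cont_PP)

lemma PP_diag: assumes "0 \<le> u" "u \<le> 1" "r \<le> 1" shows "PP r u u \<le> u"
proof -
  have "PP r u u = u * u + r * (u * (1-u))" unfolding PP_def using gg_sq[OF assms(1,2)] by (simp add: mult.assoc)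
  moreover have "r * (u * (1-u)) \<le> 1 * (u * (1-u))" using assms by (intro mult_right_mono) auto
  ultimately show ?thesis by (simp add: algebra_simps)
qed

lemma derivK: assumes r: "0 \<le> r" "r \<le> 1" and v: "0 \<le> v" "v \<le> 1" and u: "0 < u" "u < 1"
  and na: "u \<noteq> r^2 * v / (r^2 * v + 1 - v)" and nb: "u \<noteq> v / (r^2 * (1-v) + v)"
  shows "((\<lambda>x. KK r x v) has_real_derivative DD r u v) (at u)"
proof -
  consider "v = 0" | "v = 1" | "0 < v" "v < 1" using v by linarith
  then show ?thesis
  proof cases
    case 1
    have "DD r u v = 0" using 1 u unfolding DD_def PP_def by simp
    moreover have "((\<lambda>x. 0::real) has_real_derivative 0) (at u)" by simp
    ultimately show ?thesis
      by (rule_tac has_field_derivative_transform_within_open[where S="{0<..}"]) (use 1 u in \<open>auto simp: KK_def PP_def\<close>)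
  next
    case 2
    have "DD r u v = 1" using 2 u unfolding DD_def PP_def by simp
    moreover have "((\<lambda>x. x::real) has_real_derivative 1) (at u)" by simp
    ultimately show ?thesis
      by (rule_tac has_field_derivative_transform_within_open[where S="{..<1}"]) (use 2 u in \<open>auto simp: KK_def PP_def\<close>)
  next
    case 3
    show ?thesis
    proof (cases "PP r u v < min u v")
      case True
      have D: "DD r u v = v + r * dq u * gg v" using True unfolding DD_def by simp
      have dP: "((\<lambda>x. PP r x v) has_real_derivative v + r * dq u * gg v) (at u)"
        unfolding PP_def using deriv_sq[OF u] by (auto intro!: derivative_eq_intros)
      have op: "open {x. PP r x v < min x v}"
        by (rule open_Collect_less) (intro continuous_intros cont_PP)+
      show ?thesis unfolding D
        by (rule has_field_derivative_transform_within_open[OF dP op]) (use True in \<open>auto simp: KK_def\<close>)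
    next
      case False
      show ?thesis
      proof (cases "u < v")
        case True
        have "PP r u v \<noteq> u" using eqU[of u v r] u 3 r na by auto
        then have gt: "u < PP r u v" using False True by auto
        have D: "DD r u v = 1" using False True unfolding DD_def by simp
        have op: "open ({x. x < v} \<inter> {x. x < PP r x v})"
          by (intro open_Int open_Collect_less) (intro continuous_intros cont_PP)+
        have d: "((\<lambda>x. x::real) has_real_derivative 1) (at u)" by simp
        show ?thesis unfolding D
          by (rule has_field_derivative_transform_within_open[OF d op]) (use True gt in \<open>auto simp: KK_def\<close>)
      next
        case nt: False
        have "PP r u v \<noteq> v" using eqV[of u v r] u 3 r nb by auto
        then have gt: "v < PP r u v" using False nt by auto
        have "u \<noteq> v" using PP_diag[of u r] gt u r by auto
        then have uv: "v < u" using nt by auto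
        have D: "DD r u v = 0" using False nt unfolding DD_def by simp
        have op: "open ({x. v < x} \<inter> {x. v < PP r x v})"
          by (intro open_Int open_Collect_less) (intro continuous_intros cont_PP)+
        have d: "((\<lambda>x. v) has_real_derivative 0) (at u)" by simp
        show ?thesis unfolding D
          by (rule has_field_derivative_transform_within_open[OF d op]) (use uv gt in \<open>auto simp: KK_def\<close>)
      qed
    qed
  qed
qed

lemma midiff: assumes "0<u" "u<1" "0<v" "v<1" "0 \<le> r"
  shows "PP r u v < min u v \<longleftrightarrow> r^2 * (1-u) * v < u * (1-v) \<and> r^2 * u * (1-v) < v * (1-u)"
  using lessU[OF assms] lessV[OF assms] by auto

lemma DD_bounds: assumes r: "0 \<le> r" "r \<le> 1" and u: "0 < u" "u < 1" and v: "0 \<le> v" "v \<le> 1"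
  shows "0 \<le> DD r u v \<and> DD r u v \<le> 1"
proof (cases "PP r u v < min u v")
  case True
  have "v \<noteq> 0" using True u unfolding PP_def by auto
  moreover have "v \<noteq> 1" using True u unfolding PP_def by auto
  ultimately have v': "0 < v" "v < 1" using v by auto
  have "r^2 * (1-u) * v < u * (1-v)" "r^2 * u * (1-v) < v * (1-u)"
    using midiff[OF u v' r(1)] True by auto
  from Qbounds[OF u v' r(1) this] show ?thesis using True unfolding DD_def by simp
next
  case False then show ?thesis unfolding DD_def by (simp only: if_False) simp
qed

lemma DD_mono: assumes r: "0 \<le> r" "r \<le> 1" and u: "0 < u" "u < 1"
  and v: "0 \<le> v1" "v1 \<le> v2" "v2 \<le> 1"
  shows "DD r u v1 \<le> DD r u v2"
proof -
  have b1: "0 \<le> DD r u v1 \<and> DD r u v1 \<le> 1" using DD_bounds[OF r u] v by auto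
  have b2: "0 \<le> DD r u v2 \<and> DD r u v2 \<le> 1" using DD_bounds[OF r u] v by auto
  consider "v1 = 0" | "v2 = 1" | "0 < v1" "v2 < 1" using v by linarith
  then show ?thesis
  proof cases
    case 1
    then have "DD r u v1 = 0" using u unfolding DD_def PP_def by simp
    then show ?thesis using b2 by simp
  next
    case 2
    then have "DD r u v2 = 1" using u unfolding DD_def PP_def by simp
    then show ?thesis using b1 by simp
  next
    case 3
    have v1': "0 < v1" "v1 < 1" and v2': "0 < v2" "v2 < 1" using 3 v by auto
    note m1 = midiff[OF u v1' r(1)] and m2 = midiff[OF u v2' r(1)]
    have r2: "0 \<le> r^2" by simp
    have c1mono: "r^2 * (1-u) * x < u * (1-x)" if "r^2 * (1-u) * y < u * (1-y)" "x \<le> y" for x y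
    proof -
      have "r^2 * (1-u) * x \<le> r^2 * (1-u) * y" using that u r2 by (intro mult_left_mono) auto
      moreover have "u * (1-y) \<le> u * (1-x)" using that u by (intro mult_left_mono) auto
      ultimately show ?thesis using that by linarith
    qed
    have c2mono: "r^2 * u * (1-y) < y * (1-u)" if "r^2 * u * (1-x) < x * (1-u)" "x \<le> y" for x y
    proof -
      have "r^2 * u * (1-y) \<le> r^2 * u * (1-x)" using that u r2 by (intro mult_left_mono) auto
      moreover have "x * (1-u) \<le> y * (1-u)" using that u by (intro mult_right_mono) auto
      ultimately show ?thesis using that by linarith
    qed
    show ?thesis
    proof (cases "PP r u v1 < min u v1")
      case mid1: True
      show ?thesis
      proof (cases "PP r u v2 < min u v2")
        case mid2: True
        have D1: "DD r u v1 = v1 + r * dq u * gg v1" using mid1 unfolding DD_def by simp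
        have D2: "DD r u v2 = v2 + r * dq u * gg v2" using mid2 unfolding DD_def by simp
        have "(\<lambda>x. x + r * dq u * gg x) v1 \<le> (\<lambda>x. x + r * dq u * gg x) v2"
        proof (rule DERIV_nonneg_imp_increasing_open[OF v(2)])
          fix x assume x: "v1 < x" "x < v2"
          have x': "0 < x" "x < 1" using x v1' v2' by auto
          have c1: "r^2 * (1-u) * x < u * (1-x)" using c1mono[of v2 x] mid2 m2 x by auto
          have c2: "r^2 * u * (1-x) < x * (1-u)" using c2mono[of v1 x] mid1 m1 x by auto
          have "((\<lambda>x. x + r * dq u * gg x) has_real_derivative 1 + r * dq u * dq x) (at x)"
            using deriv_sq[OF x'] by (auto intro!: derivative_eq_intros)
          then show "\<exists>y. ((\<lambda>x. x + r * dq u * gg x) has_real_derivative y) (at x) \<and> 0 \<le> y"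
            using dQnonneg[OF u x' r(1) c1 c2] by blast
        next
          show "continuous_on {v1..v2} (\<lambda>x. x + r * dq u * gg x)" by (intro continuous_intros)
        qed
        then show ?thesis using D1 D2 by simp
      next
        case nmid2: False
        show ?thesis
        proof (cases "u < v2")
          case True
          then have "DD r u v2 = 1" using nmid2 unfolding DD_def by simp
          then show ?thesis using b1 by simp
        next
          case False
          then have "\<not> PP r u v2 < v2" using nmid2 by (simp add: min_def split: if_splits)
          then have "\<not> r^2 * u * (1-v2) < v2 * (1-u)" using lessV[OF u v2' r(1)] by simp
          then have "\<not> r^2 * u * (1-v1) < v1 * (1-u)" using c2mono[of v1 v2] v by auto
          then show ?thesis using mid1 m1 by simp
        qed
      qed
    next
      case nmid1: False
      show ?thesis
      proof (cases "u < v1")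
        case True
        then have "\<not> PP r u v1 < u" using nmid1 by (simp add: min_def split: if_splits)
        then have "\<not> r^2 * (1-u) * v1 < u * (1-v1)" using lessU[OF u v1' r(1)] by simp
        then have "\<not> r^2 * (1-u) * v2 < u * (1-v2)" using c1mono[of v2 v1] v by auto
        then have "\<not> PP r u v2 < min u v2" using m2 by simp
        then have "DD r u v2 = 1" using True v unfolding DD_def by simp
        then show ?thesis using b1 by simp
      next
        case False
        then have "DD r u v1 = 0" using nmid1 unfolding DD_def by simp
        then show ?thesis using b2 by simp
      qed
    qed
  qed
qed

lemma KK_rect: assumes r: "0 \<le> r" "r \<le> 1" and u: "0 \<le> u1" "u1 \<le> u2" "u2 \<le> 1"
  and v: "0 \<le> v1" "v1 \<le> v2" "v2 \<le> 1"
  shows "KK r u2 v2 - KK r u2 v1 - KK r u1 v2 + KK r u1 v1 \<ge> 0"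
proof -
  define f where "f x = KK r x v2 - KK r x v1" for x
  define f' where "f' x = max 0 (DD r x v2 - DD r x v1)" for x
  define S where "S = {r^2 * v1 / (r^2 * v1 + 1 - v1), v1 / (r^2 * (1-v1) + v1),
                       r^2 * v2 / (r^2 * v2 + 1 - v2), v2 / (r^2 * (1-v2) + v2)}"
  have "(f' has_integral (f u2 - f u1)) {u1..u2}"
  proof (rule fundamental_theorem_of_calculus_interior_strong[where S=S])
    show "finite S" unfolding S_def by simp
    show "u1 \<le> u2" by fact
    show "continuous_on {u1..u2} f" unfolding f_def by (intro continuous_intros cont_KK)
    fix x assume x: "x \<in> {u1<..<u2} - S"
    then have x': "0 < x" "x < 1" using u by auto
    have d1: "((\<lambda>x. KK r x v1) has_real_derivative DD r x v1) (at x)"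
      by (rule derivK) (use r v x' x in \<open>auto simp: S_def\<close>)
    have d2: "((\<lambda>x. KK r x v2) has_real_derivative DD r x v2) (at x)"
      by (rule derivK) (use r v x' x in \<open>auto simp: S_def\<close>)
    have "DD r x v1 \<le> DD r x v2" using DD_mono[OF r x' v] .
    then have "f' x = DD r x v2 - DD r x v1" unfolding f'_def by simp
    then have "(f has_real_derivative f' x) (at x)" unfolding f_def
      using DERIV_diff[OF d2 d1] by simp
    then show "(f has_vector_derivative f' x) (at x)"
      by (simp add: has_real_derivative_iff_has_vector_derivative)
  qed
  then have "0 \<le> f u2 - f u1" by (rule has_integral_nonneg) (simp add: f'_def)
  then show ?thesis unfolding f_def by simp
qed


lemma sqrt_split: "sqrt (u * (1 - u) * v * (1 - v)) = gg u * gg v"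
proof -
  have "u * (1 - u) * v * (1 - v) = (u * (1 - u)) * (v * (1 - v))" by (simp add: mult.assoc)
  then show ?thesis unfolding gg_def by (simp only: real_sqrt_mult)
qed

lemma corr_pos: assumes r: "0 \<le> r" "r \<le> 1" and u: "0 \<le> u" "u \<le> 1" and v: "0 \<le> v" "v \<le> 1"
  shows "corr_and r u v = KK r u v"
proof (cases "u \<in> {0,1} \<or> v \<in> {0,1}")
  case True
  then have "gg u * gg v = 0" by auto
  then have "PP r u v = u * v" unfolding PP_def by (simp add: mult.assoc)
  moreover have "u * v \<le> u" "u * v \<le> v" using u v by (auto simp: mult_left_le mult_left_le_one_le)
  ultimately have "KK r u v = u * v" unfolding KK_def by simp
  then show ?thesis using True unfolding corr_and_def by simp
next
  case False
  then have u': "0 < u" "u < 1" and v': "0 < v" "v < 1" using u v by auto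
  define s where "s = gg u * gg v"
  have sp: "s > 0" unfolding s_def using gg_pos u' v' by auto
  have sq: "sqrt (u * (1 - u) * v * (1 - v)) = s" unfolding s_def by (rule sqrt_split)
  have "max (u + v - 1) 0 - u * v < 0"
  proof -
    have "u + v - 1 < u * v" using mult_pos_pos[of "1-u" "1-v"] u' v' by (simp add: algebra_simps)
    moreover have "0 < u * v" using u' v' by simp
    ultimately show ?thesis by simp
  qed
  then have lo: "rho_lower u v < 0" unfolding rho_lower_def sq using sp by (simp add: divide_neg_pos)
  have hi: "r \<ge> rho_upper u v \<longleftrightarrow> min u v \<le> u * v + r * s"
    unfolding rho_upper_def sq using sp by (simp add: divide_le_eq algebra_simps)
  have P: "PP r u v = u * v + r * s" unfolding PP_def s_def by simp
  have c: "corr_and r u v = (if r \<ge> rho_upper u v then min u v else u * v + r * s)"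
    using False lo r unfolding corr_and_def frechetM_def sq by auto
  show ?thesis
  proof (cases "r \<ge> rho_upper u v")
    case True then show ?thesis using c hi unfolding KK_def P by simp
  next
    case False then show ?thesis using c hi unfolding KK_def P by simp
  qed
qed

lemma corr_neg: assumes r: "-1 \<le> r" "r \<le> 0" and u: "0 \<le> u" "u \<le> 1" and v: "0 \<le> v" "v \<le> 1"
  shows "corr_and r u v = u - KK (-r) u (1-v)"
proof (cases "u \<in> {0,1} \<or> v \<in> {0,1}")
  case True
  then have "gg u * gg (1-v) = 0" by (auto simp: gg_refl)
  then have "PP (-r) u (1-v) = u * (1-v)" unfolding PP_def by (simp add: mult.assoc)
  moreover have "u * (1-v) \<le> u" "u * (1-v) \<le> 1-v" using u v by (auto simp: mult_left_le mult_left_le_one_le)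
  ultimately have "KK (-r) u (1-v) = u * (1-v)" unfolding KK_def by simp
  then show ?thesis using True unfolding corr_and_def by (simp add: algebra_simps)
next
  case False
  then have u': "0 < u" "u < 1" and v': "0 < v" "v < 1" using u v by auto
  define s where "s = gg u * gg v"
  have sp: "s > 0" unfolding s_def using gg_pos u' v' by auto
  have sq: "sqrt (u * (1 - u) * v * (1 - v)) = s" unfolding s_def by (rule sqrt_split)
  have "min u v - u * v > 0"
  proof -
    have "u * v < u" using u' v' by simp
    moreover have "u * v < v" using u' v' by simp
    ultimately show ?thesis by simp
  qed
  then have hi: "rho_upper u v > 0" unfolding rho_upper_def sq using sp by simp
  have lo: "r \<le> rho_lower u v \<longleftrightarrow> u * v + r * s \<le> max (u + v - 1) 0"
    unfolding rho_lower_def sq using sp by (simp add: le_divide_eq algebra_simps)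
  have P: "PP (-r) u (1-v) = u - (u * v + r * s)" unfolding PP_def s_def by (simp add: gg_refl algebra_simps)
  have c: "corr_and r u v = (if r \<le> rho_lower u v then max (u + v - 1) 0 else u * v + r * s)"
    using False hi r unfolding corr_and_def frechetW_def sq by auto
  have K: "KK (-r) u (1-v) = u - max (max 0 (u+v-1)) (u * v + r * s)" unfolding KK_def P
    unfolding min_def max_def by auto
  show ?thesis
  proof (cases "r \<le> rho_lower u v")
    case True then show ?thesis using c lo unfolding K by (auto simp: max_def split: if_splits)
  next
    case False then show ?thesis using c lo unfolding K by (auto simp: max_def split: if_splits)
  qed
qed

lemma sqle: "0 \<le> (a::real) \<Longrightarrow> 0 \<le> b \<Longrightarrow> b * b \<le> a * a \<Longrightarrow> b \<le> a"
  using sqless[of a b] by linarith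

lemma KK1: assumes u: "0 \<le> u" "u \<le> 1" and v: "0 \<le> v" "v \<le> 1" shows "KK 1 u v = min u v"
proof -
  have g: "0 \<le> gg u * gg v" unfolding gg_def using u v by (intro mult_nonneg_nonneg real_sqrt_ge_zero) auto
  have gg2: "(gg u * gg v) * (gg u * gg v) = (u * (1-u)) * (v * (1-v))"
  proof -
    have "(gg u * gg v) * (gg u * gg v) = (gg u * gg u) * (gg v * gg v)" by (simp add: algebra_simps)
    then show ?thesis unfolding gg_sq[OF u] gg_sq[OF v] .
  qed
  have "min u v \<le> PP 1 u v"
  proof (cases "u \<le> v")
    case True
    have "u * (1-v) \<le> (1-u) * v" using True by (simp add: algebra_simps)
    then have "(u * (1-v)) * (u * (1-v)) \<le> ((1-u) * v) * (u * (1-v))"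
      using u v by (intro mult_right_mono) auto
    also have "\<dots> = (gg u * gg v) * (gg u * gg v)" unfolding gg2 by (simp add: algebra_simps)
    finally have c: "(u * (1-v)) * (u * (1-v)) \<le> (gg u * gg v) * (gg u * gg v)" .
    have "u * (1-v) \<le> gg u * gg v" by (rule sqle[OF g _ c]) (use u v in simp)
    moreover have "u * (1-v) = u - u * v" by (simp add: algebra_simps)
    moreover have "PP 1 u v = u * v + gg u * gg v" unfolding PP_def by simp
    moreover have "min u v = u" using True by simp
    ultimately show ?thesis by linarith
  next
    case False
    have "v * (1-u) \<le> (1-v) * u" using False by (simp add: algebra_simps)
    then have "(v * (1-u)) * (v * (1-u)) \<le> ((1-v) * u) * (v * (1-u))"
      using u v by (intro mult_right_mono) auto
    also have "\<dots> = (gg u * gg v) * (gg u * gg v)" unfolding gg2 by (simp add: algebra_simps)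
    finally have c: "(v * (1-u)) * (v * (1-u)) \<le> (gg u * gg v) * (gg u * gg v)" .
    have "v * (1-u) \<le> gg u * gg v" by (rule sqle[OF g _ c]) (use u v in simp)
    moreover have "v * (1-u) = v - u * v" by (simp add: algebra_simps)
    moreover have "PP 1 u v = u * v + gg u * gg v" unfolding PP_def by simp
    moreover have "min u v = v" using False by simp
    ultimately show ?thesis by linarith
  qed
  then show ?thesis unfolding KK_def by simp
qed

theorem mainTheorem2:
  shows
   "(\<forall>\<rho> \<in> {-1..1::real}.
       (\<forall>v \<in> {0..1}. corr_and \<rho> 0 v = 0) \<and>
       (\<forall>u \<in> {0..1}. corr_and \<rho> u 0 = 0) \<and>
       (\<forall>u \<in> {0..1}. corr_and \<rho> u 1 = u) \<and>
       (\<forall>v \<in> {0..1}. corr_and \<rho> 1 v = v) \<and>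
       (\<forall>u1 u2 v1 v2. 0 \<le> u1 \<longrightarrow> u1 \<le> u2 \<longrightarrow> u2 \<le> 1 \<longrightarrow>
          0 \<le> v1 \<longrightarrow> v1 \<le> v2 \<longrightarrow> v2 \<le> 1 \<longrightarrow>
          corr_and \<rho> u2 v2 - corr_and \<rho> u2 v1 - corr_and \<rho> u1 v2 + corr_and \<rho> u1 v1 \<ge> 0))
    \<and> (\<forall>u \<in> {0..1}. \<forall>v \<in> {0..1}.
         corr_and (-1) u v = frechetW u v \<and>
         corr_and 0 u v = u * v \<and>
         corr_and 1 u v = frechetM u v)"
proof -
  have R: "corr_and \<rho> u2 v2 - corr_and \<rho> u2 v1 - corr_and \<rho> u1 v2 + corr_and \<rho> u1 v1 \<ge> 0"
    if r: "-1 \<le> \<rho>" "\<rho> \<le> 1" and u: "0 \<le> u1" "u1 \<le> u2" "u2 \<le> 1"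
      and v: "0 \<le> v1" "v1 \<le> v2" "v2 \<le> 1" for \<rho> u1 u2 v1 v2 :: real
  proof (cases "0 \<le> \<rho>")
    case True
    have "corr_and \<rho> u2 v2 = KK \<rho> u2 v2" "corr_and \<rho> u2 v1 = KK \<rho> u2 v1"
         "corr_and \<rho> u1 v2 = KK \<rho> u1 v2" "corr_and \<rho> u1 v1 = KK \<rho> u1 v1"
      using corr_pos True r u v by auto
    then show ?thesis using KK_rect[OF True r(2) u v] by simp
  next
    case False
    have "corr_and \<rho> u2 v2 = u2 - KK (-\<rho>) u2 (1-v2)" "corr_and \<rho> u2 v1 = u2 - KK (-\<rho>) u2 (1-v1)"
         "corr_and \<rho> u1 v2 = u1 - KK (-\<rho>) u1 (1-v2)" "corr_and \<rho> u1 v1 = u1 - KK (-\<rho>) u1 (1-v1)"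
      using corr_neg False r u v by auto
    moreover have "KK (-\<rho>) u2 (1-v1) - KK (-\<rho>) u2 (1-v2) - KK (-\<rho>) u1 (1-v1) + KK (-\<rho>) u1 (1-v2) \<ge> 0"
      using KK_rect[of "-\<rho>" u1 u2 "1-v2" "1-v1"] False r u v by auto
    ultimately show ?thesis by simp
  qed
  have F: "corr_and (-1) u v = frechetW u v \<and> corr_and 0 u v = u * v \<and> corr_and 1 u v = frechetM u v"
    if u: "0 \<le> u" "u \<le> 1" and v: "0 \<le> v" "v \<le> 1" for u v :: real
  proof (intro conjI)
    have "corr_and (-1) u v = u - KK 1 u (1-v)" using corr_neg[of "-1" u v] u v by simp
    also have "\<dots> = u - min u (1-v)" using KK1[of u "1-v"] u v by simp
    also have "\<dots> = frechetW u v" unfolding frechetW_def by (auto simp: min_def max_def)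
    finally show "corr_and (-1) u v = frechetW u v" .
    have "u * v \<le> u" "u * v \<le> v" using u v by (auto simp: mult_left_le mult_left_le_one_le)
    then show "corr_and 0 u v = u * v" using corr_pos[of 0 u v] u v unfolding KK_def PP_def by simp
    show "corr_and 1 u v = frechetM u v" using corr_pos[of 1 u v] KK1[of u v] u v unfolding frechetM_def by simp
  qed
  have B1: "corr_and \<rho> 0 v = 0" "corr_and \<rho> u 0 = 0" "corr_and \<rho> u 1 = u" "corr_and \<rho> 1 v = v"
    for \<rho> u v :: real unfolding corr_and_def by simp_all
  show ?thesis
  proof (intro conjI ballI allI impI)
    fix \<rho> :: real and u1 u2 v1 v2 :: real assume "\<rho> \<in> {-1..1}" "0 \<le> u1" "u1 \<le> u2" "u2 \<le> 1"
      "0 \<le> v1" "v1 \<le> v2" "v2 \<le> 1"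
    then show "corr_and \<rho> u2 v2 - corr_and \<rho> u2 v1 - corr_and \<rho> u1 v2 + corr_and \<rho> u1 v1 \<ge> 0"
      using R by simp
  next
    fix u v :: real assume "u \<in> {0..1}" "v \<in> {0..1}"
    then show "corr_and (-1) u v = frechetW u v" "corr_and 0 u v = u * v" "corr_and 1 u v = frechetM u v"
      using F by auto
  qed (simp_all add: B1)
qed

end
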